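(* Let $q$ be a prime power, $M\geq2$ an integer, $k\geq 1$, and let $f\in\mathbb{F}_q[x]$ be a SRIM polynomial of degree $2k$ such that $f(x^M)$ has a SRIM factor of degree $2k$. Let $C_f\in\mathrm{Sp}(2k,q)$ be an element with characteristic polynomial $f$. Then there exists $\alpha\in\mathrm{Sp}(2k,q)$ with $\alpha^M=C_f$.
   Context: For a monic polynomial $f$ of degree $r$ with $f(0)\neq0$, $f^*(x)=f(0)^{-1}x^rf(x^{-1})$; $f$ is self-reciprocal if $f=f^*$. SRIM means self-reciprocal irreducible monic. $\mathrm{Sp}(2k,q)$ is the symplectic group of a non-degenerate alternating form on $\mathbb{F}_q^{2k}$. *)

theory Defs
  imports "Jordan_Normal_Form.Char_Poly" "HOL-Computational_Algebra.Polynomial_Factorial"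
begin

(* reciprocal f* = f(0)^{-1} x^r f(1/x); reflect_poly f = x^(degree f) f(1/x) when f(0) \<noteq> 0 *)
definition reciprocal_poly :: "'a::field poly \<Rightarrow> 'a poly" where
  "reciprocal_poly f = Polynomial.smult (inverse (coeff f 0)) (reflect_poly f)"

definition self_reciprocal :: "'a::field poly \<Rightarrow> bool" where
  "self_reciprocal f \<longleftrightarrow> coeff f 0 \<noteq> 0 \<and> reciprocal_poly f = f"

definition srim :: "'a::field poly \<Rightarrow> bool" where
  "srim f \<longleftrightarrow> self_reciprocal f \<and> irreducible f \<and> monic f"

definition nondeg_alternating_mat :: "nat \<Rightarrow> 'a::field mat \<Rightarrow> bool" where
  "nondeg_alternating_mat n J \<longleftrightarrow> J \<in> carrier_mat n n \<and> transpose_mat J = - J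
     \<and> (\<forall>i<n. J $$ (i, i) = 0) \<and> det J \<noteq> 0"

definition symplectic_group :: "nat \<Rightarrow> 'a::field mat \<Rightarrow> 'a mat set" where
  "symplectic_group n J = {A \<in> carrier_mat n n. transpose_mat A * J * A = J}"

end

theory Submission
  imports Defs
begin


lemma monom_1_eq: "monom (1::'a::comm_ring_1) M = [:0,1:] ^ M"
  by (simp add: monom_altdef)

lemma pcompose_x_left[simp]: "[:0,1:] \<circ>\<^sub>p (q::'a::comm_ring_1 poly) = q"
  by simp

lemma dvd_pcompose_left:
  fixes g :: "'a::field poly"
  assumes "g dvd a - b" "g dvd g \<circ>\<^sub>p h"
  shows "g dvd (a \<circ>\<^sub>p h) - (b \<circ>\<^sub>p h)"
proof -
  obtain t where "a - b = g * t" using assms(1) by (metis dvdE)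
  then have "(a \<circ>\<^sub>p h) - (b \<circ>\<^sub>p h) = (g \<circ>\<^sub>p h) * (t \<circ>\<^sub>p h)"
    by (metis pcompose_diff pcompose_mult)
  then show ?thesis using assms(2) by simp
qed

lemma dvd_pcompose_right:
  fixes g :: "'a::field poly"
  assumes "g dvd a - b"
  shows "g dvd (s \<circ>\<^sub>p a) - (s \<circ>\<^sub>p b)"
proof (induction s)
  case 0
  then show ?case by simp
next
  case (pCons c s)
  have "(pCons c s \<circ>\<^sub>p a) - (pCons c s \<circ>\<^sub>p b) = a * ((s \<circ>\<^sub>p a) - (s \<circ>\<^sub>p b)) + (a - b) * (s \<circ>\<^sub>p b)"
    by (simp add: pcompose_pCons algebra_simps)
  then show ?case using pCons assms by simp
qed

lemma exists_inv_x:
  fixes g :: "'a::field poly"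
  assumes "coeff g 0 \<noteq> 0"
  shows "\<exists>h. g dvd [:0,1:] * h - 1"
proof -
  obtain c g' where g: "g = pCons c g'" by (cases g) auto
  then have c: "c \<noteq> 0" using assms by simp
  have "[:0,1:] * Polynomial.smult (- inverse c) g' - 1 = Polynomial.smult (- inverse c) g"
    using c unfolding g by (intro poly_eqI) (simp add: coeff_pCons coeff_1 split: nat.split)
  then show ?thesis by (metis dvd_smult dvd_refl)
qed

lemma cancel_x1:
  fixes g :: "'a::field poly"
  assumes "g dvd [:0,1:] * h - 1" "g dvd [:0,1:] * B"
  shows "g dvd B"
proof -
  have "B = h * ([:0,1:] * B) - ([:0,1:] * h - 1) * B" by (simp add: algebra_simps)
  also have "g dvd \<dots>" by (rule dvd_diff[OF dvd_mult[OF assms(2)] dvd_mult2[OF assms(1)]])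
  finally show ?thesis .
qed

lemma cancel_xn:
  fixes g :: "'a::field poly"
  assumes "g dvd [:0,1:] * h - 1" "g dvd [:0,1:] ^ n * A"
  shows "g dvd A"
  using assms(2)
proof (induction n)
  case 0 then show ?case by simp
next
  case (Suc n)
  then have "g dvd [:0,1:] * ([:0,1:] ^ n * A)" by (simp add: mult.assoc)
  then show ?case using Suc cancel_x1[OF assms(1)] by blast
qed

lemma poly_bezout:
  fixes a b :: "'a::field poly"
  assumes "\<And>c. c dvd a \<Longrightarrow> c dvd b \<Longrightarrow> is_unit c"
  shows "\<exists>u v. u * a + v * b = 1"
  using assms
proof (induction "euclidean_size b" arbitrary: a b rule: less_induct)
  case less
  show ?case
  proof (cases "b = 0")
    case True
    have "is_unit a" by (rule less.prems) (simp_all add: True)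
    then obtain w where "1 = a * w" by (rule dvdE)
    then show ?thesis by (intro exI[of _ w] exI[of _ 0]) (simp add: mult.commute)
  next
    case False
    have lt: "euclidean_size (a mod b) < euclidean_size b" using False by (rule mod_size_less)
    have "\<And>c. c dvd b \<Longrightarrow> c dvd a mod b \<Longrightarrow> is_unit c"
    proof -
      fix c assume c: "c dvd b" "c dvd a mod b"
      have "c dvd a div b * b + a mod b" by (rule dvd_add[OF dvd_mult[OF c(1)] c(2)])
      then have "c dvd a" by simp
      then show "is_unit c" by (rule less.prems[OF _ c(1)])
    qed
    then have "\<exists>u v. u * b + v * (a mod b) = 1" by (rule less.hyps[OF lt])
    then obtain u v where uv: "u * b + v * (a mod b) = 1" by blast
    have modeq: "a mod b = a - a div b * b" by (simp add: minus_div_mult_eq_mod)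
    have uv2: "u * b + v * (a - a div b * b) = 1" using uv unfolding modeq .
    have "v * a + (u - v * (a div b)) * b = u * b + v * (a - a div b * b)" by (simp add: algebra_simps)
    then have "v * a + (u - v * (a div b)) * b = 1" using uv2 by simp
    then show ?thesis by blast
  qed
qed

lemma irreducible_bezout:
  fixes f t :: "'a::field poly"
  assumes "irreducible f" "\<not> f dvd t"
  shows "\<exists>u v. u * f + v * t = 1"
proof (rule poly_bezout)
  fix c assume c: "c dvd f" "c dvd t"
  from c(1) obtain d where d: "f = c * d" by (rule dvdE)
  have "is_unit c \<or> is_unit d" by (rule irreducibleD[OF assms(1) d])
  moreover have "\<not> is_unit d"
  proof
    assume "is_unit d"
    then have "f dvd c" using d by (simp add: mult_unit_dvd_iff)
    then show False using c assms(2) by (meson dvd_trans)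
  qed
  ultimately show "is_unit c" by blast
qed

lemma finite_deg_less: "finite {p::'a::{finite,zero} poly. degree p < n}"
proof -
  have "{p::'a poly. degree p < n} \<subseteq> Poly ` {xs. set xs \<subseteq> UNIV \<and> length xs \<le> n}"
  proof
    fix p :: "'a poly" assume "p \<in> {p. degree p < n}"
    then have "length (coeffs p) \<le> n"
      by (cases "p = 0") (auto simp: length_coeffs_degree)
    then show "p \<in> Poly ` {xs. set xs \<subseteq> UNIV \<and> length xs \<le> n}"
      by (intro image_eqI[of _ _ "coeffs p"]) auto
  qed
  moreover have "finite (Poly ` {xs. set xs \<subseteq> (UNIV::'a set) \<and> length xs \<le> n})"
    by (intro finite_imageI finite_lists_length_le) simp
  ultimately show ?thesis by (rule finite_subset)
qed

lemma diff_dvd_power_diff: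
  fixes a b :: "'a::comm_ring_1"
  shows "a - b dvd a ^ n - b ^ n"
proof (induction n)
  case 0 then show ?case by simp
next
  case (Suc n)
  have "a ^ Suc n - b ^ Suc n = a * (a ^ n - b ^ n) + (a - b) * b ^ n" by (simp add: algebra_simps)
  then show ?case using Suc by simp
qed

lemma refl_compose:
  fixes g :: "'a::field poly"
  assumes h: "g dvd [:0,1:] * h - 1"
  shows "g dvd [:0,1:] ^ degree p * (p \<circ>\<^sub>p h) - reflect_poly p"
proof (induction p)
  case 0 then show ?case by simp
next
  case (pCons a q)
  show ?case
  proof (cases "q = 0")
    case True then show ?thesis by simp
  next
    case False
    let ?x = "[:0,1:] :: 'a poly"
    have "?x ^ degree (pCons a q) * (pCons a q \<circ>\<^sub>p h) - reflect_poly (pCons a q)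
      = ?x ^ degree q * (?x * h - 1) * (q \<circ>\<^sub>p h) + (?x ^ degree q * (q \<circ>\<^sub>p h) - reflect_poly q)"
      using False by (simp add: reflect_poly_pCons' pcompose_pCons monom_altdef algebra_simps)
    also have "g dvd \<dots>" using pCons h by (intro dvd_add dvd_mult2 dvd_mult) auto
    finally show ?thesis .
  qed
qed

lemma poly_core:
  fixes f g :: "'a::{field,finite} poly"
  assumes f_irr: "irreducible f" and df: "degree f = n" and dg: "degree g = n" and n2: "2 \<le> n"
    and gd: "g dvd f \<circ>\<^sub>p monom 1 M"
    and f0: "coeff f 0 \<noteq> 0" and g0: "coeff g 0 \<noteq> 0"
    and grefl: "reflect_poly g = Polynomial.smult (coeff g 0) g"
  shows "\<exists>s hf. f dvd [:0,1:] * hf - 1 \<and> f dvd s ^ M - [:0,1:] \<and> f dvd s * (s \<circ>\<^sub>p hf) - 1"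
proof -
  let ?x = "[:0,1:] :: 'a poly"
  define X where "X = (monom 1 M :: 'a poly)"
  have X: "X = ?x ^ M" unfolding X_def by (rule monom_1_eq)
  have gnz: "g \<noteq> 0" using dg n2 by auto
  have inj: "f dvd t" if "g dvd t \<circ>\<^sub>p X" for t
  proof (rule ccontr)
    assume "\<not> f dvd t"
    then obtain u v where "u * f + v * t = 1" using irreducible_bezout[OF f_irr] by blast
    then have "(u \<circ>\<^sub>p X) * (f \<circ>\<^sub>p X) + (v \<circ>\<^sub>p X) * (t \<circ>\<^sub>p X) = 1"
      by (metis pcompose_add pcompose_mult pcompose_1)
    moreover have "g dvd (u \<circ>\<^sub>p X) * (f \<circ>\<^sub>p X) + (v \<circ>\<^sub>p X) * (t \<circ>\<^sub>p X)"
      using gd that unfolding X_def by (intro dvd_add dvd_mult) auto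
    ultimately have "is_unit g" by simp
    then show False using gnz dg n2 by (simp add: is_unit_iff_degree)
  qed
  define S where "S = {p::'a poly. degree p < n}"
  define \<phi> where "\<phi> p = (p \<circ>\<^sub>p X) mod g" for p
  have "\<phi> ` S \<subseteq> S"
  proof
    fix y assume "y \<in> \<phi> ` S"
    then obtain p where "y = (p \<circ>\<^sub>p X) mod g" unfolding \<phi>_def by auto
    then show "y \<in> S" unfolding S_def using degree_mod_less[OF gnz, of "p \<circ>\<^sub>p X"] dg n2 by auto
  qed
  moreover have "inj_on \<phi> S"
  proof
    fix p1 p2 assume p: "p1 \<in> S" "p2 \<in> S" "\<phi> p1 = \<phi> p2"
    then have "g dvd (p1 - p2) \<circ>\<^sub>p X" unfolding \<phi>_def by (simp add: mod_eq_dvd_iff pcompose_diff)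
    then have fd: "f dvd p1 - p2" by (rule inj)
    show "p1 = p2"
    proof (rule ccontr)
      assume "p1 \<noteq> p2"
      then have "degree f \<le> degree (p1 - p2)" by (intro dvd_imp_degree_le[OF fd]) simp
      moreover have "degree (p1 - p2) < n" using p unfolding S_def
        using degree_diff_le_max[of p1 p2] by auto
      ultimately show False using df by simp
    qed
  qed
  ultimately have "\<phi> ` S = S" using finite_deg_less unfolding S_def by (intro endo_inj_surj) auto
  moreover have "?x \<in> S" unfolding S_def using n2 by simp
  ultimately obtain s where "\<phi> s = ?x" by (metis imageE)
  then have "(s \<circ>\<^sub>p X) mod g = ?x mod g" unfolding \<phi>_def using dg n2 by (simp add: mod_poly_less)
  then have sX: "g dvd (s \<circ>\<^sub>p X) - ?x" by (simp add: mod_eq_dvd_iff)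
  have c1: "f dvd s ^ M - ?x"
  proof (rule inj)
    have "(s ^ M - ?x) \<circ>\<^sub>p X = (s \<circ>\<^sub>p X) ^ M - ?x ^ M"
      by (simp add: pcompose_diff pcompose_hom.hom_power X)
    moreover have "(s \<circ>\<^sub>p X) - ?x dvd (s \<circ>\<^sub>p X) ^ M - ?x ^ M" by (rule diff_dvd_power_diff)
    ultimately show "g dvd (s ^ M - ?x) \<circ>\<^sub>p X" using sX by (metis dvd_trans)
  qed
  obtain hf where hf: "f dvd ?x * hf - 1" using exists_inv_x[OF f0] by blast
  obtain hg where hg: "g dvd ?x * hg - 1" using exists_inv_x[OF g0] by blast
  have gg: "g dvd g \<circ>\<^sub>p hg"
  proof (rule cancel_xn[OF hg])
    have "g dvd ?x ^ degree g * (g \<circ>\<^sub>p hg) - reflect_poly g" by (rule refl_compose[OF hg])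
    moreover have "g dvd reflect_poly g" unfolding grefl by (rule dvd_smult) simp
    ultimately show "g dvd ?x ^ degree g * (g \<circ>\<^sub>p hg)" by (metis dvd_add diff_add_cancel)
  qed
  have h1: "g dvd (hf \<circ>\<^sub>p X) - hg ^ M"
  proof (rule cancel_xn[OF hg, of M])
    have "(?x * hf - 1) \<circ>\<^sub>p X = X * (hf \<circ>\<^sub>p X) - 1" by (simp add: pcompose_diff pcompose_mult)
    moreover have "g dvd (?x * hf - 1) \<circ>\<^sub>p X"
    proof -
      obtain w where "?x * hf - 1 = f * w" using hf by (rule dvdE)
      then have "(?x * hf - 1) \<circ>\<^sub>p X = (f \<circ>\<^sub>p X) * (w \<circ>\<^sub>p X)" by (simp add: pcompose_mult)
      then show ?thesis using gd unfolding X_def by simp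
    qed
    ultimately have a: "g dvd X * (hf \<circ>\<^sub>p X) - 1" by simp
    have "?x * hg - 1 dvd (?x * hg) ^ M - 1 ^ M" by (rule diff_dvd_power_diff)
    then have "g dvd (?x * hg) ^ M - 1 ^ M" using hg by (meson dvd_trans)
    then have b: "g dvd X * hg ^ M - 1" by (simp only: X power_mult_distrib power_one)
    have "?x ^ M * ((hf \<circ>\<^sub>p X) - hg ^ M) = (X * (hf \<circ>\<^sub>p X) - 1) - (X * hg ^ M - 1)"
      by (simp add: X algebra_simps)
    then show "g dvd ?x ^ M * ((hf \<circ>\<^sub>p X) - hg ^ M)" using dvd_diff[OF a b] by simp
  qed
  have h2: "g dvd (s \<circ>\<^sub>p (hf \<circ>\<^sub>p X)) - (s \<circ>\<^sub>p (hg ^ M))" by (rule dvd_pcompose_right[OF h1])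
  have h3: "s \<circ>\<^sub>p (hg ^ M) = (s \<circ>\<^sub>p X) \<circ>\<^sub>p hg"
    by (simp add: pcompose_assoc[symmetric] X pcompose_hom.hom_power)
  have h4: "g dvd ((s \<circ>\<^sub>p X) \<circ>\<^sub>p hg) - hg"
    using dvd_pcompose_left[OF sX gg] by simp
  have h5: "g dvd ((s \<circ>\<^sub>p hf) \<circ>\<^sub>p X) - hg"
  proof -
    have eq: "((s \<circ>\<^sub>p hf) \<circ>\<^sub>p X) - hg = ((s \<circ>\<^sub>p (hf \<circ>\<^sub>p X)) - (s \<circ>\<^sub>p (hg ^ M))) + (((s \<circ>\<^sub>p X) \<circ>\<^sub>p hg) - hg)"
      by (simp add: h3 pcompose_assoc)
    show ?thesis unfolding eq by (rule dvd_add[OF h2 h4])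
  qed
  have c2: "f dvd s * (s \<circ>\<^sub>p hf) - 1"
  proof (rule inj)
    let ?A = "s \<circ>\<^sub>p X" and ?B = "(s \<circ>\<^sub>p hf) \<circ>\<^sub>p X"
    have "(s * (s \<circ>\<^sub>p hf) - 1) \<circ>\<^sub>p X = (?A - ?x) * ?B + ?x * (?B - hg) + (?x * hg - 1)"
      by (simp add: pcompose_diff pcompose_mult algebra_simps)
    also have "g dvd \<dots>" using sX h5 hg by (intro dvd_add dvd_mult2 dvd_mult) auto
    finally show "g dvd (s * (s \<circ>\<^sub>p hf) - 1) \<circ>\<^sub>p X" .
  qed
  show ?thesis using hf c1 c2 by blast
qed



primrec hor :: "nat \<Rightarrow> 'a::comm_ring_1 mat \<Rightarrow> 'a list \<Rightarrow> 'a mat" where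
  "hor n A [] = 0\<^sub>m n n"
| "hor n A (a # as) = a \<cdot>\<^sub>m 1\<^sub>m n + A * hor n A as"

definition meval :: "nat \<Rightarrow> 'a::comm_ring_1 mat \<Rightarrow> 'a poly \<Rightarrow> 'a mat" where
  "meval n A p = hor n A (coeffs p)"

lemma smult_one_mat[simp]: "(1::'a::comm_ring_1) \<cdot>\<^sub>m A = A"
  by (intro eq_matI) auto

lemma smult_zero_mat[simp]: "(0::'a::comm_ring_1) \<cdot>\<^sub>m A = 0\<^sub>m (dim_row A) (dim_col A)"
  by (intro eq_matI) auto

lemma hor_carrier: "A \<in> carrier_mat n n \<Longrightarrow> hor n A xs \<in> carrier_mat n n"
  by (induction xs) auto

lemma meval_carrier[simp]: "A \<in> carrier_mat n n \<Longrightarrow> meval n A p \<in> carrier_mat n n"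
  unfolding meval_def by (rule hor_carrier)

lemma meval_dim[simp]: "A \<in> carrier_mat n n \<Longrightarrow> dim_row (meval n A p) = n"
  "A \<in> carrier_mat n n \<Longrightarrow> dim_col (meval n A p) = n"
  using meval_carrier by (blast dest: carrier_matD)+

lemma meval_0[simp]: "meval n A 0 = 0\<^sub>m n n"
  unfolding meval_def by simp

lemma meval_pCons:
  assumes A: "A \<in> carrier_mat n n"
  shows "meval n A (pCons a p) = a \<cdot>\<^sub>m 1\<^sub>m n + A * meval n A p"
proof (cases "a = 0 \<and> p = 0")
  case True
  then show ?thesis using A by (auto intro!: eq_matI)
next
  case False
  then have "coeffs (pCons a p) = a # coeffs p" by (auto simp: cCons_def)
  then show ?thesis unfolding meval_def by simp
qed

lemma meval_pCons0:
  assumes A: "A \<in> carrier_mat n n"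
  shows "meval n A (pCons 0 p) = A * meval n A p"
  using A by (simp add: meval_pCons left_add_zero_mat[of _ n n])

lemma pow_mat_commute:
  assumes A: "A \<in> carrier_mat n n"
  shows "A * A ^\<^sub>m k = A ^\<^sub>m k * A"
proof (induction k)
  case 0 then show ?case using A by simp
next
  case (Suc k)
  have "A * A ^\<^sub>m Suc k = (A * A ^\<^sub>m k) * A"
    using A by (simp add: assoc_mult_mat[of _ n n _ n _ n])
  then show ?case using Suc by simp
qed

lemma meval_const:
  assumes A: "A \<in> carrier_mat n n"
  shows "meval n A [:a:] = a \<cdot>\<^sub>m 1\<^sub>m n"
  using meval_pCons[OF A, of a 0] A by simp

lemma meval_add:
  assumes A: "A \<in> carrier_mat n n"
  shows "meval n A (p + q) = meval n A p + meval n A q"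
proof (induction p q rule: poly_induct2)
  case 0
  then show ?case by simp
next
  case (pCons a p b q)
  have "meval n A (pCons a p + pCons b q) = (a + b) \<cdot>\<^sub>m 1\<^sub>m n + A * (meval n A p + meval n A q)"
    using pCons A by (simp add: meval_pCons)
  also have "\<dots> = (a + b) \<cdot>\<^sub>m 1\<^sub>m n + (A * meval n A p + A * meval n A q)"
    using A by (subst mult_add_distrib_mat[of A n n]) auto
  also have "\<dots> = meval n A (pCons a p) + meval n A (pCons b q)"
    using A by (simp add: meval_pCons) (rule eq_matI, auto simp: algebra_simps)
  finally show ?case .
qed

lemma meval_smult:
  assumes A: "A \<in> carrier_mat n n"
  shows "meval n A (Polynomial.smult c p) = c \<cdot>\<^sub>m meval n A p"
proof (induction p)
  case 0 then show ?case by (auto intro!: eq_matI)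
next
  case (pCons a p)
  have "meval n A (Polynomial.smult c (pCons a p)) = (c * a) \<cdot>\<^sub>m 1\<^sub>m n + A * (c \<cdot>\<^sub>m meval n A p)"
    using pCons A by (simp add: meval_pCons)
  also have "\<dots> = c \<cdot>\<^sub>m meval n A (pCons a p)"
    using A by (simp add: meval_pCons mult_smult_distrib[of _ n n _ n]) (rule eq_matI, auto simp: algebra_simps)
  finally show ?case .
qed

lemma meval_uminus:
  assumes A: "A \<in> carrier_mat n n"
  shows "meval n A (- p) = (-1) \<cdot>\<^sub>m meval n A p"
  using meval_smult[OF A, of "-1" p] by simp

lemma meval_diff:
  assumes A: "A \<in> carrier_mat n n"
  shows "meval n A (p - q) = meval n A p - meval n A q"
proof -
  have "meval n A (p - q) = meval n A p + (-1) \<cdot>\<^sub>m meval n A q"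
    using meval_add[OF A, of p "-q"] meval_uminus[OF A] by simp
  also have "\<dots> = meval n A p - meval n A q"
    using A by (intro eq_matI) auto
  finally show ?thesis .
qed

lemma meval_mult:
  assumes A: "A \<in> carrier_mat n n"
  shows "meval n A (p * q) = meval n A p * meval n A q"
proof (induction p)
  case 0 then show ?case using A by (simp add: left_mult_zero_mat[of _ n n])
next
  case (pCons a p)
  have "pCons a p * q = Polynomial.smult a q + pCons 0 (p * q)" by simp
  then have "meval n A (pCons a p * q) = a \<cdot>\<^sub>m meval n A q + A * (meval n A p * meval n A q)"
    using A pCons by (simp add: meval_add meval_smult meval_pCons0)
  also have "\<dots> = (a \<cdot>\<^sub>m 1\<^sub>m n + A * meval n A p) * meval n A q"
  proof -
    have c: "meval n A p \<in> carrier_mat n n" "meval n A q \<in> carrier_mat n n" using A by auto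
    have "(a \<cdot>\<^sub>m 1\<^sub>m n + A * meval n A p) * meval n A q
       = (a \<cdot>\<^sub>m 1\<^sub>m n) * meval n A q + (A * meval n A p) * meval n A q"
      using A c by (intro add_mult_distrib_mat[of _ n n]) auto
    also have "(a \<cdot>\<^sub>m 1\<^sub>m n) * meval n A q = a \<cdot>\<^sub>m meval n A q"
      using c by (simp add: mult_smult_assoc_mat[of _ n n])
    also have "(A * meval n A p) * meval n A q = A * (meval n A p * meval n A q)"
      using A c by (rule assoc_mult_mat)
    finally show ?thesis by simp
  qed
  finally show ?case using A by (simp add: meval_pCons)
qed

lemma meval_1[simp]:
  assumes A: "A \<in> carrier_mat n n"
  shows "meval n A 1 = 1\<^sub>m n"
  using meval_const[OF A, of 1] by (simp add: one_pCons)

lemma meval_x: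
  assumes A: "A \<in> carrier_mat n n"
  shows "meval n A [:0,1:] = A"
  using A by (simp add: meval_pCons meval_const right_mult_one_mat[of _ n n])

lemma meval_power:
  assumes A: "A \<in> carrier_mat n n"
  shows "meval n A (p ^ k) = meval n A p ^\<^sub>m k"
proof (induction k)
  case 0 then show ?case using A by simp
next
  case (Suc k)
  then show ?case using A by (simp add: meval_mult pow_mat_commute[OF meval_carrier[OF A]])
qed

lemma meval_pcompose:
  assumes A: "A \<in> carrier_mat n n"
  shows "meval n A (p \<circ>\<^sub>p q) = meval n (meval n A q) p"
proof (induction p)
  case 0 then show ?case by simp
next
  case (pCons a p)
  then show ?case using A
    by (simp add: pcompose_pCons meval_add meval_mult meval_const meval_pCons)
qed

lemma mult_entry:
  assumes "A \<in> carrier_mat nr n" "B \<in> carrier_mat n nc" "i < nr" "j < nc"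
  shows "(A * B) $$ (i, j) = (\<Sum>l<n. A $$ (i, l) * B $$ (l, j))"
  using assms by (simp add: scalar_prod_def atLeast0LessThan)

lemma meval_entry:
  assumes A: "A \<in> carrier_mat n n" and j: "j < n"
  shows "\<forall>k\<ge>N. coeff p k = 0 \<Longrightarrow> i < n \<Longrightarrow> meval n A p $$ (i, j) = (\<Sum>k<N. coeff p k * (A ^\<^sub>m k) $$ (i, j))"
proof (induction p arbitrary: N i)
  case 0 then show ?case using A j by simp
next
  case (pCons a p)
  have ij: "i < n" "j < n" using pCons.prems(2) j by auto
  show ?case
  proof (cases N)
    case 0
    then have "pCons a p = 0" using pCons.prems by (intro poly_eqI) simp
    then show ?thesis using 0 A ij by simp
  next
    case (Suc N')
    have cp: "\<forall>k\<ge>N'. coeff p k = 0"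
    proof (intro allI impI)
      fix k assume "N' \<le> k"
      then have "Suc k \<ge> N" using Suc by simp
      then have "coeff (pCons a p) (Suc k) = 0" using pCons.prems(1) by blast
      then show "coeff p k = 0" by simp
    qed
    have IH: "meval n A p $$ (l, j) = (\<Sum>k<N'. coeff p k * (A ^\<^sub>m k) $$ (l, j))" if "l < n" for l
      by (rule pCons.IH[OF cp that])
    have "meval n A (pCons a p) $$ (i, j) = a * (1\<^sub>m n) $$ (i, j) + (A * meval n A p) $$ (i, j)"
      using A ij by (simp add: meval_pCons)
    also have "(A * meval n A p) $$ (i, j) = (\<Sum>l<n. A $$ (i, l) * meval n A p $$ (l, j))"
      using A ij by (intro mult_entry) auto
    also have "\<dots> = (\<Sum>l<n. \<Sum>k<N'. coeff p k * (A $$ (i, l) * (A ^\<^sub>m k) $$ (l, j)))"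
      by (simp add: IH sum_distrib_left algebra_simps)
    also have "\<dots> = (\<Sum>k<N'. coeff p k * (\<Sum>l<n. A $$ (i, l) * (A ^\<^sub>m k) $$ (l, j)))"
      by (subst sum.swap) (simp add: sum_distrib_left)
    also have "\<dots> = (\<Sum>k<N'. coeff p k * (A ^\<^sub>m Suc k) $$ (i, j))"
    proof (intro sum.cong refl arg_cong2[where f = "(*)"])
      fix k
      have "(A ^\<^sub>m Suc k) $$ (i, j) = (A * A ^\<^sub>m k) $$ (i, j)" using pow_mat_commute[OF A] by simp
      also have "\<dots> = (\<Sum>l<n. A $$ (i, l) * (A ^\<^sub>m k) $$ (l, j))"
        using A ij by (intro mult_entry) (auto simp: pow_carrier_mat)
      finally show "(\<Sum>l<n. A $$ (i, l) * (A ^\<^sub>m k) $$ (l, j)) = (A ^\<^sub>m Suc k) $$ (i, j)" by simp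
    qed
    also have "a * (1\<^sub>m n) $$ (i, j) = coeff (pCons a p) 0 * (A ^\<^sub>m 0) $$ (i, j)"
      using A ij by simp
    finally have eq: "meval n A (pCons a p) $$ (i, j) = coeff (pCons a p) 0 * (A ^\<^sub>m 0) $$ (i, j)
        + (\<Sum>k<N'. coeff p k * (A ^\<^sub>m Suc k) $$ (i, j))" .
    have "(\<Sum>k<Suc N'. coeff (pCons a p) k * (A ^\<^sub>m k) $$ (i, j)) = coeff (pCons a p) 0 * (A ^\<^sub>m 0) $$ (i, j)
        + (\<Sum>k<N'. coeff (pCons a p) (Suc k) * (A ^\<^sub>m Suc k) $$ (i, j))"
      by (rule sum.lessThan_Suc_shift)
    then show ?thesis unfolding Suc eq coeff_pCons_Suc by simp
  qed
qed

lemma char_poly_matrix_entry: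
  assumes A: "A \<in> carrier_mat n n" and jl: "j < n" "l < n"
  shows "char_poly_matrix A $$ (j, l) = (if j = l then [:0,1:] else 0) + [:- A $$ (j, l):]"
  using A jl unfolding char_poly_matrix_def by simp

lemma coeff_mult_x: "coeff ((q::'a::comm_ring_1 poly) * [:0,1:]) i = (if i = 0 then 0 else coeff q (i - 1))"
  by (cases i) (simp_all add: coeff_pCons)

lemma cayley_hamilton:
  fixes A :: "'a::comm_ring_1 mat"
  assumes A: "A \<in> carrier_mat n n"
  shows "meval n A (char_poly A) = 0\<^sub>m n n"
proof -
  define P where "P = char_poly_matrix A"
  define Q where "Q = adj_mat P"
  define \<chi> where "\<chi> = char_poly A"
  have P: "P \<in> carrier_mat n n" unfolding P_def using A by simp
  have Q: "Q \<in> carrier_mat n n" unfolding Q_def using adj_mat(1)[OF P] .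
  have QP: "Q * P = \<chi> \<cdot>\<^sub>m 1\<^sub>m n" unfolding Q_def \<chi>_def char_poly_def P_def[symmetric]
    using adj_mat(3)[OF P] .
  have key: "(if r = l then coeff \<chi> i else 0) =
     (if i = 0 then 0 else coeff (Q $$ (r, l)) (i - 1)) - (\<Sum>j<n. coeff (Q $$ (r, j)) i * A $$ (j, l))"
    if rl: "r < n" "l < n" for r l i
  proof -
    have "(if r = l then \<chi> else 0) = (Q * P) $$ (r, l)" using QP rl by simp
    also have "\<dots> = (\<Sum>j<n. Q $$ (r, j) * P $$ (j, l))" using Q P rl by (intro mult_entry) auto
    also have "\<dots> = (\<Sum>j<n. (if j = l then Q $$ (r, j) * [:0,1:] else 0) + Q $$ (r, j) * [:- A $$ (j, l):])"
      unfolding P_def using A rl by (intro sum.cong refl) (simp add: char_poly_matrix_entry distrib_left)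
    finally have E: "(if r = l then \<chi> else 0) = (\<Sum>j<n. (if j = l then Q $$ (r, j) * [:0,1:] else 0) + Q $$ (r, j) * [:- A $$ (j, l):])" .
    have "(if r = l then coeff \<chi> i else 0) = coeff (if r = l then \<chi> else 0) i" by simp
    also have "\<dots> = coeff (\<Sum>j<n. (if j = l then Q $$ (r, j) * [:0,1:] else 0) + Q $$ (r, j) * [:- A $$ (j, l):]) i"
      by (simp only: E)
    also have "\<dots> = (\<Sum>j<n. (if j = l then coeff (Q $$ (r, j) * [:0,1:]) i else 0) - coeff (Q $$ (r, j)) i * A $$ (j, l))"
      by (simp add: coeff_sum if_distrib[of "\<lambda>x. coeff x i"] mult.commute cong: if_cong)
    also have "\<dots> = coeff (Q $$ (r, l) * [:0,1:]) i - (\<Sum>j<n. coeff (Q $$ (r, j)) i * A $$ (j, l))"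
      using rl by (simp add: sum_subtractf)
    finally show ?thesis by (simp only: coeff_mult_x)
  qed
  define D where "D = Max (insert (degree \<chi>) {degree (Q $$ (r, j)) | r j. r < n \<and> j < n})"
  have finD: "finite (insert (degree \<chi>) {degree (Q $$ (r, j)) | r j. r < n \<and> j < n})"
  proof -
    have "{degree (Q $$ (r, j)) | r j. r < n \<and> j < n} = (\<lambda>(r,j). degree (Q $$ (r, j))) ` ({..<n} \<times> {..<n})"
      by auto
    then show ?thesis by simp
  qed
  have Dchi: "coeff \<chi> k = 0" if "k > D" for k
  proof -
    have "degree \<chi> \<le> D" unfolding D_def using finD by (intro Max_ge) auto
    then show ?thesis using that by (intro coeff_eq_0) auto
  qed
  have DQ: "coeff (Q $$ (r, j)) k = 0" if "k > D" "r < n" "j < n" for k r j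
  proof -
    have "degree (Q $$ (r, j)) \<le> D" unfolding D_def using finD that by (intro Max_ge) auto
    then show ?thesis using that by (intro coeff_eq_0) auto
  qed
  define N where "N = D + 2"
  show ?thesis
  proof (rule eq_matI)
    fix r c assume rc: "r < dim_row (0\<^sub>m n n :: 'a mat)" "c < dim_col (0\<^sub>m n n :: 'a mat)"
    then have r: "r < n" and c: "c < n" by auto
    define G where "G i = (\<Sum>l<n. (if i = 0 then 0 else coeff (Q $$ (r, l)) (i - 1)) * (A ^\<^sub>m i) $$ (l, c))" for i
    have step: "coeff \<chi> i * (A ^\<^sub>m i) $$ (r, c) = G i - G (Suc i)" for i
    proof -
      have "coeff \<chi> i * (A ^\<^sub>m i) $$ (r, c) = (\<Sum>l<n. (if r = l then coeff \<chi> i else 0) * (A ^\<^sub>m i) $$ (l, c))"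
        using r by (simp add: if_distrib[of "\<lambda>x. x * _"] cong: if_cong)
      also have "\<dots> = (\<Sum>l<n. ((if i = 0 then 0 else coeff (Q $$ (r, l)) (i - 1)) - (\<Sum>j<n. coeff (Q $$ (r, j)) i * A $$ (j, l))) * (A ^\<^sub>m i) $$ (l, c))"
        using key r by (intro sum.cong refl) auto
      also have "\<dots> = G i - (\<Sum>l<n. \<Sum>j<n. coeff (Q $$ (r, j)) i * (A $$ (j, l) * (A ^\<^sub>m i) $$ (l, c)))"
        unfolding G_def by (simp add: left_diff_distrib sum_subtractf sum_distrib_right sum_distrib_left algebra_simps)
      also have "(\<Sum>l<n. \<Sum>j<n. coeff (Q $$ (r, j)) i * (A $$ (j, l) * (A ^\<^sub>m i) $$ (l, c)))
          = (\<Sum>j<n. coeff (Q $$ (r, j)) i * (\<Sum>l<n. A $$ (j, l) * (A ^\<^sub>m i) $$ (l, c)))"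
        by (subst sum.swap) (simp add: sum_distrib_left)
      also have "\<dots> = G (Suc i)"
        unfolding G_def
      proof (intro sum.cong refl, simp)
        fix j assume j: "j < n"
        have "(A ^\<^sub>m Suc i) $$ (j, c) = (A * A ^\<^sub>m i) $$ (j, c)" using pow_mat_commute[OF A] by simp
        also have "\<dots> = (\<Sum>l<n. A $$ (j, l) * (A ^\<^sub>m i) $$ (l, c))"
          using A j c by (intro mult_entry) (auto simp: pow_carrier_mat)
        finally show "coeff (Q $$ (r, j)) i * (\<Sum>l<n. A $$ (j, l) * (A ^\<^sub>m i) $$ (l, c)) =
            coeff (Q $$ (r, j)) i * (A ^\<^sub>m i * A) $$ (j, c)" by simp
      qed
      finally show ?thesis .
    qed
    have "meval n A \<chi> $$ (r, c) = (\<Sum>i<N. coeff \<chi> i * (A ^\<^sub>m i) $$ (r, c))"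
      using A r c Dchi unfolding N_def by (intro meval_entry) auto
    also have "\<dots> = (\<Sum>i<N. G i - G (Suc i))" using step by simp
    also have "\<dots> = G 0 - G N" by (rule sum_lessThan_telescope')
    also have "G N = 0" unfolding G_def N_def using DQ r by (intro sum.neutral) auto
    also have "G 0 = 0" unfolding G_def by simp
    finally show "meval n A (char_poly A) $$ (r, c) = 0\<^sub>m n n $$ (r, c)"
      using r c unfolding \<chi>_def by simp
  qed (simp_all add: A)
qed

lemma meval_comm:
  assumes A: "A \<in> carrier_mat n n"
  shows "meval n A p * A = A * meval n A p"
proof -
  have "meval n A p * A = meval n A (p * [:0,1:])" by (simp only: meval_mult[OF A] meval_x[OF A])
  also have "\<dots> = meval n A ([:0,1:] * p)" by (simp only: mult.commute)
  also have "\<dots> = A * meval n A p" by (simp only: meval_mult[OF A] meval_x[OF A])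
  finally show ?thesis .
qed

lemma transpose_smult_one: "(a \<cdot>\<^sub>m 1\<^sub>m n)\<^sup>T = a \<cdot>\<^sub>m 1\<^sub>m n"
  by (intro eq_matI) auto

lemma meval_transpose:
  assumes A: "A \<in> carrier_mat n n"
  shows "(meval n A p)\<^sup>T = meval n A\<^sup>T p"
proof (induction p)
  case 0 then show ?case by (intro eq_matI) auto
next
  case (pCons a p)
  have At: "A\<^sup>T \<in> carrier_mat n n" using A by simp
  have "(meval n A (pCons a p))\<^sup>T = (a \<cdot>\<^sub>m 1\<^sub>m n)\<^sup>T + (A * meval n A p)\<^sup>T"
    using A by (simp add: meval_pCons transpose_add[of _ n n])
  also have "(A * meval n A p)\<^sup>T = (meval n A p)\<^sup>T * A\<^sup>T"
    using A by (intro transpose_mult) auto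
  also have "\<dots> = A\<^sup>T * meval n A\<^sup>T p" using pCons meval_comm[OF At] by simp
  finally show ?case using At by (simp add: meval_pCons transpose_smult_one)
qed

lemma meval_intertwine:
  assumes X: "X \<in> carrier_mat n n" and Y: "Y \<in> carrier_mat n n" and J: "J \<in> carrier_mat n n"
    and XJ: "X * J = J * Y"
  shows "meval n X p * J = J * meval n Y p"
proof (induction p)
  case 0 then show ?case using J by (simp add: left_mult_zero_mat[of _ n n] right_mult_zero_mat[of _ n n])
next
  case (pCons a p)
  let ?P = "meval n X p" and ?Q = "meval n Y p"
  have P: "?P \<in> carrier_mat n n" and Q: "?Q \<in> carrier_mat n n" using X Y by auto
  have "meval n X (pCons a p) * J = (a \<cdot>\<^sub>m 1\<^sub>m n) * J + (X * ?P) * J"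
    using X J P by (simp add: meval_pCons add_mult_distrib_mat[of _ n n])
  also have "(a \<cdot>\<^sub>m 1\<^sub>m n) * J = a \<cdot>\<^sub>m J" using J by (simp add: mult_smult_assoc_mat[of _ n n])
  also have "(X * ?P) * J = X * (?P * J)" using X P J by (rule assoc_mult_mat)
  also have "\<dots> = X * (J * ?Q)" using pCons by simp
  also have "\<dots> = (X * J) * ?Q" using X J Q by (simp add: assoc_mult_mat[of _ n n _ n _ n])
  also have "\<dots> = (J * Y) * ?Q" using XJ by simp
  also have "\<dots> = J * (Y * ?Q)" using J Y Q by (rule assoc_mult_mat)
  also have "a \<cdot>\<^sub>m J = J * (a \<cdot>\<^sub>m 1\<^sub>m n)"
    using J by (simp add: mult_smult_distrib[of J n n _ n] right_mult_one_mat[of J n n])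
  also have "J * (a \<cdot>\<^sub>m 1\<^sub>m n) + J * (Y * ?Q) = J * meval n Y (pCons a p)"
    using J Y Q by (simp add: meval_pCons mult_add_distrib_mat[of J n n _ n])
  finally show ?case .
qed

lemma meval_cong:
  assumes A: "A \<in> carrier_mat n n" and f: "meval n A f = 0\<^sub>m n n" and d: "f dvd a - b"
  shows "meval n A a = meval n A b"
proof -
  obtain w where w: "a - b = f * w" using d by (rule dvdE)
  have "meval n A a - meval n A b = 0\<^sub>m n n"
    using A by (simp add: meval_diff[symmetric] w meval_mult f left_mult_zero_mat[of _ n n])
  show ?thesis
  proof (rule eq_matI)
    fix i j assume ij: "i < dim_row (meval n A b)" "j < dim_col (meval n A b)"
    then have "(meval n A a - meval n A b) $$ (i, j) = 0" using A by (simp add: \<open>meval n A a - meval n A b = 0\<^sub>m n n\<close>)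
    then show "meval n A a $$ (i, j) = meval n A b $$ (i, j)" using A ij by simp
  qed (use A in simp_all)
qed

theorem lemma5p2:
  fixes f :: "'a::{field,finite} poly" and J C :: "'a mat" and M k :: nat
  assumes "M \<ge> 2" and "k \<ge> 1"
    and "srim f" and "degree f = 2 * k"
    and "\<exists>g. srim g \<and> degree g = 2 * k \<and> g dvd pcompose f (monom 1 M)"
    and "nondeg_alternating_mat (2 * k) J"
    and "C \<in> symplectic_group (2 * k) J" and "char_poly C = f"
  shows "\<exists>\<alpha> \<in> symplectic_group (2 * k) J. \<alpha> ^\<^sub>m M = C"
proof -
  define n where "n = 2 * k"
  have n2: "2 \<le> n" using assms(2) unfolding n_def by simp
  obtain g where g: "srim g" "degree g = n" "g dvd pcompose f (monom 1 M)"
    using assms(5) unfolding n_def by blast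
  have f_irr: "irreducible f" and f0: "coeff f 0 \<noteq> 0"
    using assms(3) unfolding srim_def self_reciprocal_def by auto
  have g0: "coeff g 0 \<noteq> 0" and grec: "reciprocal_poly g = g"
    using g(1) unfolding srim_def self_reciprocal_def by auto
  have grefl: "reflect_poly g = Polynomial.smult (coeff g 0) g"
  proof -
    have "Polynomial.smult (coeff g 0) g = Polynomial.smult (coeff g 0) (reciprocal_poly g)"
      using grec by simp
    also have "\<dots> = reflect_poly g" using g0 unfolding reciprocal_poly_def by simp
    finally show ?thesis by simp
  qed
  obtain s hf where shf: "f dvd [:0,1:] * hf - 1" "f dvd s ^ M - [:0,1:]" "f dvd s * (s \<circ>\<^sub>p hf) - 1"
    using poly_core[OF f_irr _ g(2) n2 g(3) f0 g0 grefl] assms(4) unfolding n_def by blast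
  have C: "C \<in> carrier_mat n n" and CJC: "C\<^sup>T * J * C = J"
    using assms(7) unfolding symplectic_group_def n_def by auto
  have J: "J \<in> carrier_mat n n" using assms(6) unfolding nondeg_alternating_mat_def n_def by auto
  have CH: "meval n C f = 0\<^sub>m n n" using cayley_hamilton[OF C] assms(8) by simp
  define \<alpha> where "\<alpha> = meval n C s"
  have \<alpha>: "\<alpha> \<in> carrier_mat n n" unfolding \<alpha>_def using C by simp
  have pow: "\<alpha> ^\<^sub>m M = C"
  proof -
    have "\<alpha> ^\<^sub>m M = meval n C (s ^ M)" unfolding \<alpha>_def using C by (simp add: meval_power)
    also have "\<dots> = meval n C [:0,1:]" by (rule meval_cong[OF C CH shf(2)])
    also have "\<dots> = C" using C by (rule meval_x)
    finally show ?thesis .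
  qed
  define D where "D = meval n C hf"
  have D: "D \<in> carrier_mat n n" unfolding D_def using C by simp
  have CD: "C * D = 1\<^sub>m n"
  proof -
    have "C * D = meval n C ([:0,1:] * hf)" unfolding D_def by (simp only: meval_mult[OF C] meval_x[OF C])
    also have "\<dots> = meval n C 1" by (rule meval_cong[OF C CH shf(1)])
    finally show ?thesis using C by simp
  qed
  have CtJ: "C\<^sup>T * J = J * D"
  proof -
    have Ct: "C\<^sup>T \<in> carrier_mat n n" using C by simp
    have "C\<^sup>T * J = (C\<^sup>T * J) * (C * D)" using CD Ct J by (simp add: right_mult_one_mat[of _ n n])
    also have "\<dots> = (C\<^sup>T * J * C) * D" using Ct J C D by (simp add: assoc_mult_mat[of _ n n _ n _ n])
    also have "\<dots> = J * D" using CJC by simp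
    finally show ?thesis .
  qed
  have "\<alpha>\<^sup>T * J * \<alpha> = J"
  proof -
    have Ct: "C\<^sup>T \<in> carrier_mat n n" using C by simp
    have "\<alpha>\<^sup>T * J = meval n C\<^sup>T s * J" unfolding \<alpha>_def using meval_transpose[OF C] by simp
    also have "\<dots> = J * meval n D s" by (rule meval_intertwine[OF Ct D J CtJ])
    also have "meval n D s = meval n C (s \<circ>\<^sub>p hf)" unfolding D_def using meval_pcompose[OF C] by simp
    finally have "\<alpha>\<^sup>T * J * \<alpha> = J * meval n C (s \<circ>\<^sub>p hf) * meval n C s" unfolding \<alpha>_def by simp
    also have "\<dots> = J * (meval n C (s \<circ>\<^sub>p hf) * meval n C s)"
      using J C by (simp add: assoc_mult_mat[of _ n n _ n _ n])
    also have "meval n C (s \<circ>\<^sub>p hf) * meval n C s = meval n C (s * (s \<circ>\<^sub>p hf))"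
      using C by (simp add: meval_mult[symmetric] mult.commute)
    also have "\<dots> = meval n C 1" by (rule meval_cong[OF C CH shf(3)])
    also have "J * meval n C 1 = J" using C J by (simp add: right_mult_one_mat[of _ n n])
    finally show ?thesis .
  qed
  then have "\<alpha> \<in> symplectic_group (2 * k) J" using \<alpha> unfolding symplectic_group_def n_def by simp
  then show ?thesis using pow by blast
qed

end
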